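(* Let $p$ be a prime, $K\in\{\mathbb Z_{(p)},\mathbb Z_p\}$, $F$ a field containing $K$, $G=\langle a\rangle\cong C_{p^2}$, $\Phi(x)=x^{p-1}+\dots+x+1$, and let $U_0=KC_{p^2}\Phi(a)$ be the submodule of $KC_{p^2}$ generated by $\Phi(a)$. Then for every $1$-cocycle $T:C_{p^2}\to\widehat{U_0}$ the group $\mathrm{Crys}(C_{p^2};U_0;T)$ contains an element of order $p$.
   Context: $FM=F\otimes_KM$, $\widehat M=FM/M$ with $g(x+M)=gx+M$; a $1$-cocycle is $T:G\to\widehat M$ with $T(gh)=gT(h)+T(g)$. $\mathrm{Crys}(G;M;T)=\{(g,x):g\in G,\ x\in FM,\ x+M=T(g)\}$ with $(g,x)(g',x')=(gg',g'x+x')$. *)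

theory Defs
  imports Complex_Main "HOL-Computational_Algebra.Primes"
begin

text \<open>Z_(p): the localisation of Z at p, as a subring of the rationals.\<close>
definition Zloc :: "nat \<Rightarrow> rat set" where
  "Zloc p = {q. \<not> int p dvd snd (quotient_of q)}"

text \<open>Z_p: the p-adic integers, as compatible sequences of residues (x n mod p^n).\<close>
definition Zp :: "nat \<Rightarrow> (nat \<Rightarrow> int) set" where
  "Zp p = {x. \<forall>n. 0 \<le> x n \<and> x n < int p ^ n \<and> x n = x (Suc n) mod int p ^ n}"

definition zp_add :: "nat \<Rightarrow> (nat \<Rightarrow> int) \<Rightarrow> (nat \<Rightarrow> int) \<Rightarrow> (nat \<Rightarrow> int)" where
  "zp_add p x y = (\<lambda>n. (x n + y n) mod int p ^ n)"

definition zp_mult :: "nat \<Rightarrow> (nat \<Rightarrow> int) \<Rightarrow> (nat \<Rightarrow> int) \<Rightarrow> (nat \<Rightarrow> int)" where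
  "zp_mult p x y = (\<lambda>n. (x n * y n) mod int p ^ n)"

definition zp_one :: "nat \<Rightarrow> (nat \<Rightarrow> int)" where
  "zp_one p = (\<lambda>n. 1 mod int p ^ n)"

definition ring_embedding_on ::
  "'a set \<Rightarrow> ('a \<Rightarrow> 'a \<Rightarrow> 'a) \<Rightarrow> ('a \<Rightarrow> 'a \<Rightarrow> 'a) \<Rightarrow> 'a \<Rightarrow> ('a \<Rightarrow> 'f::field) \<Rightarrow> bool" where
  "ring_embedding_on A addop multop oneop \<phi> \<longleftrightarrow>
     inj_on \<phi> A \<and> \<phi> oneop = 1 \<and>
     (\<forall>x\<in>A. \<forall>y\<in>A. \<phi> (addop x y) = \<phi> x + \<phi> y \<and> \<phi> (multop x y) = \<phi> x * \<phi> y)"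

definition is_K :: "nat \<Rightarrow> 'f::field set \<Rightarrow> bool" where
  "is_K p K \<longleftrightarrow>
     (\<exists>\<psi>::rat \<Rightarrow> 'f. ring_embedding_on (Zloc p) (+) (*) 1 \<psi> \<and> K = \<psi> ` Zloc p) \<or>
     (\<exists>\<phi>::(nat \<Rightarrow> int) \<Rightarrow> 'f. ring_embedding_on (Zp p) (zp_add p) (zp_mult p) (zp_one p) \<phi>
                                \<and> K = \<phi> ` Zp p)"

text \<open>An element of FG is x = sum_{i<n} x i * a^i, stored as a function vanishing for i >= n.
  The group element a^g is represented by g < n.\<close>
definition FG :: "nat \<Rightarrow> (nat \<Rightarrow> 'f::field) set" where
  "FG n = {x. \<forall>i\<ge>n. x i = 0}"

definition RG :: "nat \<Rightarrow> 'f::field set \<Rightarrow> (nat \<Rightarrow> 'f) set" where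
  "RG n R = {x \<in> FG n. \<forall>i<n. x i \<in> R}"

text \<open>Action of a^g: (a^g x) has coefficient x_{i-g} at a^i.\<close>
definition gact :: "nat \<Rightarrow> nat \<Rightarrow> (nat \<Rightarrow> 'f::field) \<Rightarrow> (nat \<Rightarrow> 'f)" where
  "gact n g x = (\<lambda>i. if i < n then x ((i + n - g mod n) mod n) else 0)"

definition conv :: "nat \<Rightarrow> (nat \<Rightarrow> 'f::field) \<Rightarrow> (nat \<Rightarrow> 'f) \<Rightarrow> (nat \<Rightarrow> 'f)" where
  "conv n x y = (\<lambda>i. if i < n then (\<Sum>j<n. x j * y ((i + n - j) mod n)) else 0)"

definition Phi :: "nat \<Rightarrow> (nat \<Rightarrow> 'f::field)" where
  "Phi p = (\<lambda>i. if i < p then 1 else 0)"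

definition U0 :: "nat \<Rightarrow> 'f::field set \<Rightarrow> (nat \<Rightarrow> 'f) set" where
  "U0 p K = {conv (p^2) c (Phi p) | c. c \<in> RG (p^2) K}"

text \<open>FM = F (x)_K M, realised as the F-span of M inside FG.\<close>
definition Fspan :: "(nat \<Rightarrow> 'f::field) set \<Rightarrow> (nat \<Rightarrow> 'f) set" where
  "Fspan M = {x. \<exists>S c. finite S \<and> S \<subseteq> M \<and> x = (\<lambda>i. \<Sum>m\<in>S. c m * m i)}"

definition coset :: "(nat \<Rightarrow> 'f::field) set \<Rightarrow> (nat \<Rightarrow> 'f) \<Rightarrow> (nat \<Rightarrow> 'f) set" where
  "coset M x = {(\<lambda>i. x i + m i) | m. m \<in> M}"

definition hat :: "(nat \<Rightarrow> 'f::field) set \<Rightarrow> (nat \<Rightarrow> 'f) set set" where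
  "hat M = {coset M x | x. x \<in> Fspan M}"

definition cadd :: "(nat \<Rightarrow> 'f::field) set \<Rightarrow> (nat \<Rightarrow> 'f) set \<Rightarrow> (nat \<Rightarrow> 'f) set" where
  "cadd A B = {(\<lambda>i. a i + b i) | a b. a \<in> A \<and> b \<in> B}"

definition cact :: "nat \<Rightarrow> nat \<Rightarrow> (nat \<Rightarrow> 'f::field) set \<Rightarrow> (nat \<Rightarrow> 'f) set" where
  "cact n g A = gact n g ` A"

definition cocycle :: "nat \<Rightarrow> (nat \<Rightarrow> 'f::field) set \<Rightarrow> (nat \<Rightarrow> (nat \<Rightarrow> 'f) set) \<Rightarrow> bool" where
  "cocycle n M T \<longleftrightarrow>
     (\<forall>g<n. T g \<in> hat M) \<and>
     (\<forall>g<n. \<forall>h<n. T ((g + h) mod n) = cadd (cact n g (T h)) (T g))"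

definition Crys :: "nat \<Rightarrow> (nat \<Rightarrow> 'f::field) set \<Rightarrow> (nat \<Rightarrow> (nat \<Rightarrow> 'f) set)
                     \<Rightarrow> (nat \<times> (nat \<Rightarrow> 'f)) set" where
  "Crys n M T = {(g, x). g < n \<and> x \<in> Fspan M \<and> coset M x = T g}"

definition crys_mult :: "nat \<Rightarrow> nat \<times> (nat \<Rightarrow> 'f::field) \<Rightarrow> nat \<times> (nat \<Rightarrow> 'f) \<Rightarrow> nat \<times> (nat \<Rightarrow> 'f)" where
  "crys_mult n e e' = ((fst e + fst e') mod n, (\<lambda>i. gact n (fst e') (snd e) i + snd e' i))"

definition crys_one :: "nat \<times> (nat \<Rightarrow> 'f::field)" where
  "crys_one = (0, (\<lambda>i. 0))"

definition crys_pow :: "nat \<Rightarrow> nat \<times> (nat \<Rightarrow> 'f::field) \<Rightarrow> nat \<Rightarrow> nat \<times> (nat \<Rightarrow> 'f)" where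
  "crys_pow n e k = ((crys_mult n e) ^^ k) crys_one"

end

theory Submission
  imports Defs
begin

lemma Zloc_zero: "prime p \<Longrightarrow> (0::rat) \<in> Zloc p"
  by (auto simp add: Zloc_def)

lemma Zloc_add:
  assumes "prime p" "x \<in> Zloc p" "y \<in> Zloc p" shows "x + y \<in> Zloc p"
proof -
  obtain a c where qx: "quotient_of x = (a, c)" by force
  obtain b d where qy: "quotient_of y = (b, d)" by force
  have c0: "c > 0" "d > 0" using qx qy quotient_of_denom_pos by blast+
  have nc: "\<not> int p dvd c" "\<not> int p dvd d" using assms qx qy by (auto simp: Zloc_def)
  have pr: "prime (int p)" using assms(1) by simp
  have ncd: "\<not> int p dvd c * d" using nc pr prime_dvd_mult_iff by blast
  have "snd (quotient_of (x+y)) = (c*d) div gcd (a*d+b*c) (c*d)"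
    using c0 by (simp add: rat_plus_code qx qy normalize_def Let_def)
  moreover have "(c*d) div gcd (a*d+b*c) (c*d) dvd c*d"
    by (metis dvd_div_mult_self dvd_triv_left gcd_dvd2)
  ultimately show ?thesis using ncd unfolding Zloc_def
    by (metis dvd_trans mem_Collect_eq)
qed

lemma Zloc_neg:
  assumes "x \<in> Zloc p" shows "- x \<in> Zloc p"
  using assms by (cases "quotient_of x") (simp add: Zloc_def rat_uminus_code)

lemma Zp_zero: "prime p \<Longrightarrow> (\<lambda>n. 0) \<in> Zp p"
  by (simp add: Zp_def prime_gt_0_nat)

lemma Zp_add:
  assumes "prime p" "x \<in> Zp p" "y \<in> Zp p" shows "zp_add p x y \<in> Zp p"
  unfolding Zp_def mem_Collect_eq
proof (intro allI conjI)
  fix n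
  have pp: "int p > 0" using assms(1) prime_gt_0_nat by simp
  have dv: "int p ^ n dvd int p ^ Suc n" by simp
  have h: "x n = x (Suc n) mod int p ^ n" "y n = y (Suc n) mod int p ^ n"
    using assms unfolding Zp_def by blast+
  show "0 \<le> zp_add p x y n" using pp by (simp add: zp_add_def)
  show "zp_add p x y n < int p ^ n" using pp by (simp add: zp_add_def)
  show "zp_add p x y n = zp_add p x y (Suc n) mod int p ^ n"
    unfolding zp_add_def by (simp only: mod_mod_cancel[OF dv] h mod_add_eq)
qed

definition zp_neg :: "nat \<Rightarrow> (nat \<Rightarrow> int) \<Rightarrow> (nat \<Rightarrow> int)" where
  "zp_neg p x = (\<lambda>n. (- x n) mod int p ^ n)"

lemma Zp_neg:
  assumes "prime p" "x \<in> Zp p" shows "zp_neg p x \<in> Zp p"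
  unfolding Zp_def mem_Collect_eq
proof (intro allI conjI)
  fix n
  have pp: "int p > 0" using assms(1) prime_gt_0_nat by simp
  have dv: "int p ^ n dvd int p ^ Suc n" by simp
  have h: "x n = x (Suc n) mod int p ^ n"
    using assms unfolding Zp_def by blast
  show "0 \<le> zp_neg p x n" using pp by (simp add: zp_neg_def)
  show "zp_neg p x n < int p ^ n" using pp by (simp add: zp_neg_def)
  show "zp_neg p x n = zp_neg p x (Suc n) mod int p ^ n"
    unfolding zp_neg_def by (simp only: mod_mod_cancel[OF dv] h mod_minus_eq)
qed

lemma zp_add_neg: "zp_add p x (zp_neg p x) = (\<lambda>n. 0)"
  by (rule ext) (simp add: zp_add_def zp_neg_def mod_add_right_eq)

lemma zp_add_zero: "zp_add p (\<lambda>n. 0) (\<lambda>n. 0) = (\<lambda>n. 0)"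
  by (simp add: zp_add_def)

lemma K_props:
  fixes K :: "'f::field set"
  assumes "prime p" "is_K p K"
  shows "0 \<in> K \<and> (\<forall>a\<in>K. \<forall>b\<in>K. a + b \<in> K) \<and> (\<forall>a\<in>K. - a \<in> K)"
  using assms(2) unfolding is_K_def
proof
  assume "\<exists>\<psi>::rat \<Rightarrow> 'f. ring_embedding_on (Zloc p) (+) (*) 1 \<psi> \<and> K = \<psi> ` Zloc p"
  then obtain \<psi> :: "rat \<Rightarrow> 'f" where e: "ring_embedding_on (Zloc p) (+) (*) 1 \<psi>" and K: "K = \<psi> ` Zloc p" by blast
  have add: "\<And>x y. x \<in> Zloc p \<Longrightarrow> y \<in> Zloc p \<Longrightarrow> \<psi> (x + y) = \<psi> x + \<psi> y"
    using e by (simp add: ring_embedding_on_def)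
  have z0: "(0::rat) \<in> Zloc p" by (rule Zloc_zero[OF assms(1)])
  have "\<psi> (0+0) = \<psi> 0 + \<psi> 0" using add[OF z0 z0] .
  hence "\<psi> 0 = \<psi> 0 + \<psi> 0" by (simp only: add_0_right)
  hence z: "\<psi> 0 = 0" by (metis add_cancel_right_right)
  have n: "\<psi> (-x) = - \<psi> x" if x: "x \<in> Zloc p" for x
  proof -
    have "\<psi> (x + -x) = \<psi> x + \<psi> (-x)" using add[OF x Zloc_neg[OF x]] .
    hence "\<psi> x + \<psi> (-x) = 0" using z by simp
    thus ?thesis by (simp add: add_eq_0_iff)
  qed
  show ?thesis unfolding K
  proof (intro conjI ballI)
    show "0 \<in> \<psi> ` Zloc p" using z z0 by (metis image_eqI)
  next
    fix a b assume "a \<in> \<psi> ` Zloc p" "b \<in> \<psi> ` Zloc p"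
    then obtain x y where "x \<in> Zloc p" "y \<in> Zloc p" "a = \<psi> x" "b = \<psi> y" by blast
    thus "a + b \<in> \<psi> ` Zloc p" using add Zloc_add[OF assms(1)] by (metis image_eqI)
  next
    fix a assume "a \<in> \<psi> ` Zloc p"
    then obtain x where "x \<in> Zloc p" "a = \<psi> x" by blast
    thus "- a \<in> \<psi> ` Zloc p" using n Zloc_neg by (metis image_eqI)
  qed
next
  assume "\<exists>\<phi>::(nat \<Rightarrow> int) \<Rightarrow> 'f. ring_embedding_on (Zp p) (zp_add p) (zp_mult p) (zp_one p) \<phi> \<and> K = \<phi> ` Zp p"
  then obtain \<phi> :: "(nat \<Rightarrow> int) \<Rightarrow> 'f" where e: "ring_embedding_on (Zp p) (zp_add p) (zp_mult p) (zp_one p) \<phi>" and K: "K = \<phi> ` Zp p" by blast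
  have add: "\<And>x y. x \<in> Zp p \<Longrightarrow> y \<in> Zp p \<Longrightarrow> \<phi> (zp_add p x y) = \<phi> x + \<phi> y"
    using e by (simp add: ring_embedding_on_def)
  have z0: "(\<lambda>n. 0) \<in> Zp p" by (rule Zp_zero[OF assms(1)])
  have "\<phi> (zp_add p (\<lambda>n. 0) (\<lambda>n. 0)) = \<phi> (\<lambda>n. 0) + \<phi> (\<lambda>n. 0)" using add[OF z0 z0] .
  hence "\<phi> (\<lambda>n. 0) = \<phi> (\<lambda>n. 0) + \<phi> (\<lambda>n. 0)" by (simp only: zp_add_zero)
  hence z: "\<phi> (\<lambda>n. 0) = 0" by (metis add_cancel_right_right)
  have n: "\<phi> (zp_neg p x) = - \<phi> x" if x: "x \<in> Zp p" for x
  proof -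
    have "\<phi> (zp_add p x (zp_neg p x)) = \<phi> x + \<phi> (zp_neg p x)" using add[OF x Zp_neg[OF assms(1) x]] .
    hence "\<phi> x + \<phi> (zp_neg p x) = 0" using z by (simp only: zp_add_neg)
    thus ?thesis by (simp add: add_eq_0_iff)
  qed
  show ?thesis unfolding K
  proof (intro conjI ballI)
    show "0 \<in> \<phi> ` Zp p" using z z0 by (metis image_eqI)
  next
    fix a b assume "a \<in> \<phi> ` Zp p" "b \<in> \<phi> ` Zp p"
    then obtain x y where "x \<in> Zp p" "y \<in> Zp p" "a = \<phi> x" "b = \<phi> y" by blast
    thus "a + b \<in> \<phi> ` Zp p" using add Zp_add[OF assms(1)] by (metis image_eqI)
  next
    fix a assume "a \<in> \<phi> ` Zp p"
    then obtain x where "x \<in> Zp p" "a = \<phi> x" by blast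
    thus "- a \<in> \<phi> ` Zp p" using n Zp_neg[OF assms(1)] by (metis image_eqI)
  qed
qed

lemma int_key:
  fixes r k P :: int
  assumes "0 \<le> r" "r < P*P" "0 \<le> k" "k < P" "P > 0"
  shows "(r - k*P) mod (P*P) < P \<longleftrightarrow> k = r div P"
proof -
  define q where "q = r div P"
  define s where "s = r mod P"
  have r: "r = q*P + s" by (simp add: q_def s_def)
  have s: "0 \<le> s" "s < P" using assms by (auto simp: s_def)
  have q0: "0 \<le> q" using assms by (simp add: q_def pos_imp_zdiv_nonneg_iff)
  have qP: "q < P"
  proof (rule ccontr)
    assume "\<not> q < P" hence "P*P \<le> q*P" using assms(5) by (simp add: mult_right_mono)
    thus False using r s assms by linarith
  qed
  show ?thesis
  proof (cases "k \<le> q")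
    case True
    have eq: "r - k*P = (q-k)*P + s" using r by (simp add: algebra_simps)
    have "(q-k)*P \<le> (P-1)*P" using True qP assms by (intro mult_right_mono) auto
    hence lt: "r - k*P < P*P" using eq s by (simp add: algebra_simps)
    have ge: "0 \<le> r - k*P" using eq s True assms by simp
    have m: "(r - k*P) mod (P*P) = (q-k)*P + s" using lt ge eq by simp
    show ?thesis
    proof (cases "k = q")
      case True thus ?thesis using m s q_def by simp
    next
      case False
      have "1*P \<le> (q-k)*P" using \<open>k \<le> q\<close> False assms by (intro mult_right_mono) auto
      hence "\<not> (r - k*P) mod (P*P) < P" using m s by linarith
      thus ?thesis using False q_def by simp
    qed
  next
    case False
    have eq: "r - k*P + P*P = (q-k+P)*P + s" using r by (simp add: algebra_simps)
    have "(q-k+P)*P \<le> (P-1)*P" using False assms by (intro mult_right_mono) auto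
    hence lt: "r - k*P + P*P < P*P" using eq s by (simp add: algebra_simps)
    have "1*P \<le> (q-k+P)*P" using False assms q0 by (intro mult_right_mono) auto
    hence "P \<le> (q-k+P)*P" by simp
    hence ge: "P \<le> r - k*P + P*P" using eq s by linarith
    have "(r - k*P) mod (P*P) = (r - k*P + P*P) mod (P*P)" by simp
    also have "\<dots> = r - k*P + P*P" using lt ge assms by (intro mod_pos_pos_trivial) auto
    finally show ?thesis using ge False q_def by simp
  qed
qed

lemma modsub: "(a + b - c) mod (b::int) = (a - c) mod b"
proof -
  have "a + b - c = (a - c) + b" by simp
  thus ?thesis by (simp only: mod_add_self2)
qed

lemma nat_key:
  fixes p i j k :: nat
  assumes "0 < p" "i < p^2" "j < p^2" "k < p"
  shows "((i + p^2 - k*p) mod p^2 + p^2 - j) mod p^2 < p \<longleftrightarrow> k = ((i + p^2 - j) mod p^2) div p"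
proof -
  have "k*p < p*p" using mult_strict_right_mono[of k p p] assms by simp
  hence kp: "k*p < p^2" by (simp add: power2_eq_square)
  define u where "u = (i + p^2 - k*p) mod p^2"
  have u: "u < p^2" using assms unfolding u_def by simp
  have e1: "int (i + p^2 - k*p) = int i + int p * int p - int k * int p"
  proof -
    have le: "k*p \<le> i + p^2" using kp by linarith
    have "int (i + p^2 - k*p) = int (i + p^2) - int (k*p)" by (rule of_nat_diff[OF le])
    thus ?thesis by (simp add: power2_eq_square)
  qed
  have iu: "int u = (int i - int k * int p) mod (int p * int p)"
  proof -
    have "int u = int (i + p^2 - k*p) mod int (p^2)" unfolding u_def by (simp add: zmod_int)
    also have "\<dots> = (int i - int k * int p + int p * int p) mod (int p * int p)"
      unfolding e1 by (simp add: power2_eq_square algebra_simps)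
    also have "\<dots> = (int i - int k * int p) mod (int p * int p)" by simp
    finally show ?thesis .
  qed
  have L: "int ((u + p^2 - j) mod p^2) = (int i - int j - int k * int p) mod (int p * int p)"
  proof -
    have "int ((u + p^2 - j) mod p^2) = (int u + int p * int p - int j) mod (int p * int p)"
      using assms by (simp add: zmod_int of_nat_diff power2_eq_square flip: of_nat_mult)
    also have "\<dots> = ((int u - int j) + int p * int p) mod (int p * int p)" by (simp add: algebra_simps)
    also have "\<dots> = (int u - int j) mod (int p * int p)" by (simp only: mod_add_self2)
    also have "\<dots> = (int i - int j - int k * int p) mod (int p * int p)"
      unfolding iu by (simp add: mod_diff_left_eq algebra_simps)
    finally show ?thesis .
  qed
  define r where "r = (int i - int j) mod (int p * int p)"
  have R: "int ((i + p^2 - j) mod p^2) = r"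
    unfolding r_def using assms by (simp add: zmod_int of_nat_diff power2_eq_square modsub)
  have L2: "int ((u + p^2 - j) mod p^2) = (r - int k * int p) mod (int p * int p)"
    unfolding L r_def by (simp add: mod_diff_left_eq)
  have r0: "0 \<le> r" "r < int p * int p" using assms unfolding r_def by auto
  have "((u + p^2 - j) mod p^2 < p) = (int ((u + p^2 - j) mod p^2) < int p)" by linarith
  also have "\<dots> = (int k = r div int p)" unfolding L2
    using int_key[OF r0, of "int k"] assms by simp
  also have "\<dots> = (k = ((i + p^2 - j) mod p^2) div p)"
    using R by (metis of_nat_eq_iff zdiv_int)
  finally show ?thesis unfolding u_def .
qed

definition Nb :: "nat \<Rightarrow> nat \<Rightarrow> (nat \<Rightarrow> 'f::field) \<Rightarrow> (nat \<Rightarrow> 'f)" where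
  "Nb n p y = (\<lambda>i. \<Sum>j<p. gact n (j*p) y i)"

lemma sum_inK:
  assumes "0 \<in> K" "\<forall>a\<in>K. \<forall>b\<in>K. a + b \<in> K" "\<forall>j\<in>A. f j \<in> K"
  shows "sum f A \<in> K"
  using assms(3)
proof (induction A rule: infinite_finite_induct)
  case (infinite A) thus ?case using assms(1) by simp
next
  case empty thus ?case using assms(1) by simp
next
  case (insert x F) thus ?case using assms(2) by simp
qed

lemma U0_vanish: "m \<in> U0 p K \<Longrightarrow> p^2 \<le> i \<Longrightarrow> m i = 0"
  by (auto simp: U0_def conv_def)

lemma Fspan_vanish:
  assumes "\<And>m i. m \<in> M \<Longrightarrow> n \<le> i \<Longrightarrow> m i = 0" "y \<in> Fspan M" "n \<le> i"
  shows "y i = 0"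
proof -
  obtain S c where "finite S" "S \<subseteq> M" "y = (\<lambda>i. \<Sum>m\<in>S. c m * m i)"
    using assms(2) by (auto simp: Fspan_def)
  thus ?thesis using assms(1,3) by (auto intro!: sum.neutral)
qed

lemma gact0: "(\<And>i. n \<le> i \<Longrightarrow> y i = 0) \<Longrightarrow> gact n 0 y = y"
  by (rule ext) (auto simp: gact_def)

lemma conv_add: "conv n (\<lambda>j. c1 j + c2 j) y = (\<lambda>i. conv n c1 y i + conv n c2 y i)"
  by (rule ext) (simp add: conv_def sum.distrib distrib_right)

lemma conv_neg: "conv n (\<lambda>j. - c j) y = (\<lambda>i. - conv n c y i)"
  by (rule ext) (simp add: conv_def sum_negf)

lemma conv_zero: "conv n (\<lambda>j. 0) y = (\<lambda>i. 0)"
  by (rule ext) (simp add: conv_def)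

lemma conv_delta:
  assumes "p < n" shows "conv n (\<lambda>j. if j = 0 then l else 0) (Phi p) = (\<lambda>i. l * Phi p i)"
proof (rule ext)
  fix i
  show "conv n (\<lambda>j. if j = 0 then l else 0) (Phi p) i = l * Phi p i"
  proof (cases "i < n")
    case True
    have "conv n (\<lambda>j. if j = 0 then l else 0) (Phi p) i = (\<Sum>j<n. (if j = 0 then l else 0) * Phi p ((i + n - j) mod n))"
      using True by (simp add: conv_def)
    also have "\<dots> = (\<Sum>j<n. if j = 0 then l * Phi p ((i + n - j) mod n) else 0)"
      by (intro sum.cong) auto
    also have "\<dots> = l * Phi p ((i + n) mod n)" using True by (simp add: sum.delta)
    also have "\<dots> = l * Phi p i" using True by simp
    finally show ?thesis .
  next
    case False thus ?thesis using assms by (simp add: conv_def Phi_def)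
  qed
qed

context
  fixes K :: "'f::field set" and p :: nat
  assumes K0: "0 \<in> K" and Kadd: "\<forall>a\<in>K. \<forall>b\<in>K. a + b \<in> K" and Kneg: "\<forall>a\<in>K. - a \<in> K"
begin

lemma U0_add: "m1 \<in> U0 p K \<Longrightarrow> m2 \<in> U0 p K \<Longrightarrow> (\<lambda>i. m1 i + m2 i) \<in> U0 p K"
proof -
  assume "m1 \<in> U0 p K" "m2 \<in> U0 p K"
  then obtain c1 c2 where c: "c1 \<in> RG (p^2) K" "c2 \<in> RG (p^2) K"
    "m1 = conv (p^2) c1 (Phi p)" "m2 = conv (p^2) c2 (Phi p)" by (auto simp: U0_def)
  have "(\<lambda>j. c1 j + c2 j) \<in> RG (p^2) K" using c(1,2) Kadd by (auto simp: RG_def FG_def)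
  thus ?thesis unfolding U0_def c(3,4) conv_add[symmetric] by blast
qed

lemma U0_neg: "m \<in> U0 p K \<Longrightarrow> (\<lambda>i. - m i) \<in> U0 p K"
proof -
  assume "m \<in> U0 p K"
  then obtain c where c: "c \<in> RG (p^2) K" "m = conv (p^2) c (Phi p)" by (auto simp: U0_def)
  have "(\<lambda>j. - c j) \<in> RG (p^2) K" using c(1) Kneg by (auto simp: RG_def FG_def)
  thus ?thesis unfolding U0_def c(2) conv_neg[symmetric] by blast
qed

lemma U0_zero: "(\<lambda>i. 0) \<in> U0 p K"
proof -
  have "(\<lambda>j. 0) \<in> RG (p^2) K" using K0 by (auto simp: RG_def FG_def)
  moreover have "(\<lambda>i. 0) = conv (p^2) (\<lambda>j. 0) (Phi p)" by (simp add: conv_zero)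
  ultimately show ?thesis unfolding U0_def by blast
qed

lemma U0_Phi: "p < p^2 \<Longrightarrow> l \<in> K \<Longrightarrow> (\<lambda>i. l * Phi p i) \<in> U0 p K"
proof -
  assume a: "p < p^2" "l \<in> K"
  have "(\<lambda>j. if j = 0 then l else 0) \<in> RG (p^2) K" using a K0 by (auto simp: RG_def FG_def)
  thus ?thesis unfolding U0_def conv_delta[OF a(1), symmetric] by blast
qed

lemma U0_coeff: "m \<in> U0 p K \<Longrightarrow> m i \<in> K"
proof -
  assume "m \<in> U0 p K"
  then obtain c where c: "c \<in> RG (p^2) K" "m = conv (p^2) c (Phi p)" by (auto simp: U0_def)
  show ?thesis
  proof (cases "i < p^2")
    case True
    have "m i = (\<Sum>j<p^2. c j * Phi p ((i + p^2 - j) mod p^2))" using True c(2) by (simp add: conv_def)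
    moreover have "\<forall>j\<in>{..<p^2}. c j * Phi p ((i + p^2 - j) mod p^2) \<in> K"
      using c(1) K0 by (auto simp: RG_def Phi_def)
    ultimately show ?thesis using sum_inK[OF K0 Kadd] by simp
  next
    case False thus ?thesis using c K0 by (simp add: conv_def)
  qed
qed

end

lemma gact_lin:
  "gact n g (\<lambda>i. \<Sum>m\<in>S. f m * m i) i = (\<Sum>m\<in>S. f m * gact n g m i)"
  by (simp add: gact_def)

lemma Nb_lin:
  "Nb n p (\<lambda>i. \<Sum>m\<in>S. f m * m i) i = (\<Sum>m\<in>S. f m * Nb n p m i)"
  unfolding Nb_def gact_lin by (simp add: sum_distrib_left sum.swap[of _ S])

lemma Nb_conv:
  assumes "0 < p"
  shows "Nb (p^2) p (conv (p^2) c (Phi p)) i = (if i < p^2 then (\<Sum>j<p^2. c j) else (0::'f::field))"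
proof (cases "i < p^2")
  case True
  let ?n = "p^2"
  have kp: "\<And>k. k < p \<Longrightarrow> k*p < p^2"
  proof -
    fix k assume "k < p"
    hence "k*p < p*p" using mult_strict_right_mono[of k p p] assms by simp
    thus "k*p < p^2" by (simp add: power2_eq_square)
  qed
  have "Nb ?n p (conv ?n c (Phi p)) i =
     (\<Sum>k<p. \<Sum>j<?n. c j * Phi p (((i + ?n - k*p) mod ?n + ?n - j) mod ?n))"
    using True kp unfolding Nb_def gact_def conv_def
    by (intro sum.cong) (auto simp: assms)
  also have "\<dots> = (\<Sum>j<?n. c j * (\<Sum>k<p. Phi p (((i + ?n - k*p) mod ?n + ?n - j) mod ?n)))"
    unfolding sum_distrib_left by (rule sum.swap)
  also have "\<dots> = (\<Sum>j<?n. c j)"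
  proof (intro sum.cong refl)
    fix j assume j: "j \<in> {..<?n}"
    define r where "r = (i + ?n - j) mod ?n"
    have "r < ?n" unfolding r_def using assms by simp
    hence rp: "r div p < p" using assms by (simp add: power2_eq_square less_mult_imp_div_less)
    have "(\<Sum>k<p. Phi p (((i + ?n - k*p) mod ?n + ?n - j) mod ?n)) = (\<Sum>k<p. if k = r div p then (1::'f) else 0)"
      using nat_key[OF assms True] j unfolding r_def Phi_def by (intro sum.cong) auto
    also have "\<dots> = 1" using rp by (simp add: sum.delta)
    finally show "c j * (\<Sum>k<p. Phi p (((i + ?n - k*p) mod ?n + ?n - j) mod ?n)) = c j" by simp
  qed
  finally show ?thesis using True by simp
next
  case False thus ?thesis by (simp add: Nb_def gact_def)
qed

lemma Nb_U0:
  assumes "0 < p" "m \<in> U0 p K" "i < p^2" shows "Nb (p^2) p m i = Nb (p^2) p m 0"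
proof -
  obtain c where c: "m = conv (p^2) c (Phi p)" using assms(2) by (auto simp: U0_def)
  have "0 < p^2" using assms(1) by simp
  thus ?thesis unfolding c using Nb_conv[OF assms(1), of c i] Nb_conv[OF assms(1), of c 0] assms(3) by simp
qed

lemma Nb_Fspan:
  assumes "0 < p" "y \<in> Fspan (U0 p K)" "i < p^2"
  shows "Nb (p^2) p y i = Nb (p^2) p y 0"
proof -
  obtain S c where S: "finite S" "S \<subseteq> U0 p K" "y = (\<lambda>i. \<Sum>m\<in>S. c m * m i)"
    using assms(2) by (auto simp: Fspan_def)
  have "Nb (p^2) p y i = (\<Sum>m\<in>S. c m * Nb (p^2) p m i)" unfolding S(3) Nb_lin ..
  also have "\<dots> = (\<Sum>m\<in>S. c m * Nb (p^2) p m 0)"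
    using S(2) Nb_U0[OF assms(1) _ assms(3)] by (intro sum.cong) auto
  also have "\<dots> = Nb (p^2) p y 0" unfolding S(3) Nb_lin ..
  finally show ?thesis .
qed

lemma Nb_Phi: "0 < p \<Longrightarrow> p < p^2 \<Longrightarrow> Nb (p^2) p (Phi p :: nat \<Rightarrow> 'f::field) i = (if i < p^2 then 1 else 0)"
proof -
  assume a: "0 < p" "p < p^2"
  have e: "conv (p^2) (\<lambda>j. if j = 0 then 1 else 0) (Phi p) = Phi p" using conv_delta[OF a(2), of 1] by simp
  have s1: "(\<Sum>j<p^2. if j = 0 then (1::'f) else 0) = 1" using a by (simp add: sum.delta)
  have "Nb (p^2) p (Phi p) i = (if i < p^2 then (\<Sum>j<p^2. if j = 0 then (1::'f) else 0) else 0)"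
    using Nb_conv[OF a(1), of "\<lambda>j. if j = 0 then 1 else 0" i] unfolding e .
  thus ?thesis by (simp only: s1)
qed

lemma Nb_diff: "Nb n p (\<lambda>i. y i + - (l * z i)) i = Nb n p y i - l * Nb n p z i"
  by (cases "i < n") (simp_all add: Nb_def gact_def sum_subtractf sum_distrib_left)

lemma insert_inter_self: "insert m S \<inter> S = S" by blast

lemma Fspan_add:
  assumes "u \<in> Fspan M" "m \<in> M" shows "(\<lambda>i. u i + m i) \<in> Fspan M"
proof -
  obtain S c where S: "finite S" "S \<subseteq> M" "u = (\<lambda>i. \<Sum>m\<in>S. c m * m i)"
    using assms(1) by (auto simp: Fspan_def)
  define c' where "c' = (\<lambda>m'. (if m' \<in> S then c m' else 0) + (if m' = m then 1 else 0))"
  have "(\<lambda>i. u i + m i) = (\<lambda>i. \<Sum>m'\<in>insert m S. c' m' * m' i)"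
  proof (rule ext)
    fix i
    have "(\<Sum>m'\<in>insert m S. c' m' * m' i) =
       (\<Sum>m'\<in>insert m S. (if m' \<in> S then c m' * m' i else 0)) + (\<Sum>m'\<in>insert m S. (if m' = m then m' i else 0))"
      unfolding c'_def sum.distrib[symmetric] by (intro sum.cong refl) (simp add: distrib_right)
    also have "(\<Sum>m'\<in>insert m S. (if m' \<in> S then c m' * m' i else 0)) = (\<Sum>m'\<in>S. c m' * m' i)"
      using S(1) by (simp add: sum.If_cases Int_absorb2 subset_insertI insert_inter_self)
    also have "(\<Sum>m'\<in>insert m S. (if m' = m then m' i else 0)) = m i"
      using S(1) by (simp add: sum.delta)
    finally show "u i + m i = (\<Sum>m'\<in>insert m S. c' m' * m' i)" using S(3) by simp
  qed
  moreover have "finite (insert m S)" "insert m S \<subseteq> M" using S assms(2) by auto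
  ultimately show ?thesis unfolding Fspan_def by blast
qed

lemma coset_shift:
  assumes add: "\<And>a b. a \<in> M \<Longrightarrow> b \<in> M \<Longrightarrow> (\<lambda>i. a i + b i) \<in> M"
    and neg: "\<And>a. a \<in> M \<Longrightarrow> (\<lambda>i. - a i) \<in> M"
    and m: "m \<in> M"
  shows "coset M (\<lambda>i. y i + m i) = coset M y"
proof
  show "coset M (\<lambda>i. y i + m i) \<subseteq> coset M y"
  proof
    fix w assume "w \<in> coset M (\<lambda>i. y i + m i)"
    then obtain m' where "m' \<in> M" "w = (\<lambda>i. y i + m i + m' i)" by (auto simp: coset_def)
    moreover have "(\<lambda>i. m i + m' i) \<in> M" using add m \<open>m' \<in> M\<close> by blast
    ultimately show "w \<in> coset M y" unfolding coset_def by (force simp: add.assoc)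
  qed
next
  show "coset M y \<subseteq> coset M (\<lambda>i. y i + m i)"
  proof
    fix w assume "w \<in> coset M y"
    then obtain m' where "m' \<in> M" "w = (\<lambda>i. y i + m' i)" by (auto simp: coset_def)
    moreover have "(\<lambda>i. - m i + m' i) \<in> M" using add neg m \<open>m' \<in> M\<close> by blast
    ultimately show "w \<in> coset M (\<lambda>i. y i + m i)" unfolding coset_def mem_Collect_eq
      by (intro exI[where x="\<lambda>i. - m i + m' i"]) (simp add: algebra_simps)
  qed
qed

lemma mem_coset: "(\<lambda>i. 0) \<in> M \<Longrightarrow> y \<in> coset M y"
  unfolding coset_def by force

lemma T0_sub:
  assumes coc: "cocycle n M T" and n: "0 < n"
    and add: "\<And>a b. a \<in> M \<Longrightarrow> b \<in> M \<Longrightarrow> (\<lambda>i. a i + b i) \<in> M"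
    and z0: "(\<lambda>i. 0) \<in> M"
    and van: "\<And>m i. m \<in> M \<Longrightarrow> n \<le> i \<Longrightarrow> m i = 0"
  shows "T 0 \<subseteq> M"
proof -
  have "T 0 \<in> hat M" using coc n by (simp add: cocycle_def)
  then obtain z where z: "z \<in> Fspan M" "T 0 = coset M z" by (auto simp: hat_def)
  have zv: "\<And>i. n \<le> i \<Longrightarrow> z i = 0" using Fspan_vanish[of M n z] van z(1) by blast
  have "T ((0 + 0) mod n) = cadd (cact n 0 (T 0)) (T 0)" using coc n unfolding cocycle_def by blast
  hence eq: "T 0 = cadd (cact n 0 (T 0)) (T 0)" by simp
  have zin: "z \<in> T 0" using z(2) mem_coset[OF z0] by simp
  have "gact n 0 z = z" using gact0[OF zv] by simp
  hence zc: "z \<in> cact n 0 (T 0)" unfolding cact_def using imageI[OF zin, of "gact n 0"] by simp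
  have "(\<lambda>i. z i + z i) \<in> cadd (cact n 0 (T 0)) (T 0)"
    unfolding cadd_def mem_Collect_eq by (intro exI[of _ z] conjI refl zc zin)
  hence "(\<lambda>i. z i + z i) \<in> coset M z" using eq z(2) by simp
  then obtain m where m: "m \<in> M" "(\<lambda>i. z i + z i) = (\<lambda>i. z i + m i)" by (auto simp: coset_def)
  hence "z = m" by (auto simp: fun_eq_iff)
  hence zM: "z \<in> M" using m by simp
  show ?thesis
  proof
    fix w assume "w \<in> T 0"
    then obtain m' where "m' \<in> M" "w = (\<lambda>i. z i + m' i)" using z(2) by (auto simp: coset_def)
    thus "w \<in> M" using add zM by simp
  qed
qed

lemma Sk:
  assumes coc: "cocycle n M T" and np: "n = p*p" and p1: "1 < p" and y: "y \<in> T p"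
    and yv: "\<And>i. n \<le> i \<Longrightarrow> y i = 0"
  shows "1 \<le> k \<Longrightarrow> k \<le> p \<Longrightarrow> (\<lambda>i. \<Sum>j<k. gact n (j*p) y i) \<in> T (k*p mod n)"
proof (induction k)
  case 0 thus ?case by simp
next
  case (Suc k)
  have pn: "p < n" using np p1 by simp
  show ?case
  proof (cases "k = 0")
    case True
    have "(\<lambda>i. \<Sum>j<Suc k. gact n (j*p) y i) = y" using True gact0[OF yv] by simp
    thus ?thesis using True pn y by simp
  next
    case False
    have "k*p < p*p" using Suc.prems p1 mult_strict_right_mono[of k p p] by simp
    hence kp: "k*p < n" using np by simp
    have IH: "(\<lambda>i. \<Sum>j<k. gact n (j*p) y i) \<in> T (k*p)" using Suc.IH Suc.prems False kp by simp
    have "T ((k*p + p) mod n) = cadd (cact n (k*p) (T p)) (T (k*p))"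
      using coc kp pn unfolding cocycle_def by simp
    moreover have "(\<lambda>i. gact n (k*p) y i + (\<Sum>j<k. gact n (j*p) y i)) \<in> cadd (cact n (k*p) (T p)) (T (k*p))"
      unfolding cadd_def mem_Collect_eq cact_def
      by (intro exI[of _ "gact n (k*p) y"] exI[of _ "\<lambda>i. \<Sum>j<k. gact n (j*p) y i"] conjI refl imageI[OF y] IH)
    moreover have "(\<lambda>i. \<Sum>j<Suc k. gact n (j*p) y i) = (\<lambda>i. gact n (k*p) y i + (\<Sum>j<k. gact n (j*p) y i))"
      by (simp add: add.commute)
    moreover have "Suc k * p mod n = (k*p + p) mod n" by (simp add: add.commute)
    ultimately show ?thesis by simp
  qed
qed

lemma crys_pow_eq:
  "crys_pow n (g, x) k = (k*g mod n, (\<lambda>i. \<Sum>j<k. gact n (j*g mod n) x i))"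
proof (induction k)
  case 0 thus ?case by (simp add: crys_pow_def crys_one_def)
next
  case (Suc k)
  have "crys_pow n (g, x) (Suc k) = crys_mult n (g, x) (crys_pow n (g, x) k)"
    by (simp add: crys_pow_def)
  also have "\<dots> = ((g + k*g mod n) mod n, (\<lambda>i. gact n (k*g mod n) x i + (\<Sum>j<k. gact n (j*g mod n) x i)))"
    unfolding Suc by (simp add: crys_mult_def)
  also have "\<dots> = (Suc k * g mod n, (\<lambda>i. \<Sum>j<Suc k. gact n (j*g mod n) x i))"
    by (simp add: mod_add_right_eq add.commute)
  finally show ?case .
qed

theorem lemma11:
  fixes p :: nat and K :: "'f::field set" and T :: "nat \<Rightarrow> (nat \<Rightarrow> 'f) set"
  assumes "prime p"
    and "is_K p K"
    and "cocycle (p^2) (U0 p K) T"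
  shows "\<exists>e\<in>Crys (p^2) (U0 p K) T.
           crys_pow (p^2) e p = crys_one \<and>
           (\<forall>k. 0 < k \<and> k < p \<longrightarrow> crys_pow (p^2) e k \<noteq> crys_one)"
proof -
  have p1: "1 < p" using assms(1) prime_gt_1_nat by blast
  hence p0: "0 < p" by simp
  have np: "p^2 = p*p" by (simp add: power2_eq_square)
  have pn: "p < p^2" using p1 np by simp
  have n0: "0 < p^2" using p0 by simp
  have kpn: "\<And>k. k < p \<Longrightarrow> k*p < p^2"
  proof -
    fix k assume "k < p"
    hence "k*p < p*p" using mult_strict_right_mono[of k p p] p0 by simp
    thus "k*p < p^2" using np by simp
  qed
  obtain K0: "0 \<in> K" and Kadd: "\<forall>a\<in>K. \<forall>b\<in>K. a + b \<in> K" and Kneg: "\<forall>a\<in>K. - a \<in> K"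
    using K_props[OF assms(1,2)] by blast
  have Madd: "\<And>a b. a \<in> U0 p K \<Longrightarrow> b \<in> U0 p K \<Longrightarrow> (\<lambda>i. a i + b i) \<in> U0 p K"
    using U0_add[OF K0 Kadd Kneg] by blast
  have Mneg: "\<And>a. a \<in> U0 p K \<Longrightarrow> (\<lambda>i. - a i) \<in> U0 p K"
    using U0_neg[OF K0 Kadd Kneg] by blast
  have Mzero: "(\<lambda>i. 0) \<in> U0 p K" using U0_zero[OF K0 Kadd Kneg] .
  have Mvan: "\<And>m i. m \<in> U0 p K \<Longrightarrow> p^2 \<le> i \<Longrightarrow> m i = 0" using U0_vanish by blast
  have "T p \<in> hat (U0 p K)" using assms(3) pn by (simp add: cocycle_def)
  then obtain y where yF: "y \<in> Fspan (U0 p K)" and Tp: "T p = coset (U0 p K) y"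
    by (auto simp: hat_def)
  have yT: "y \<in> T p" using Tp mem_coset[OF Mzero] by simp
  have yv: "\<And>i. p^2 \<le> i \<Longrightarrow> y i = 0" using Fspan_vanish[of "U0 p K" "p^2" y] Mvan yF by blast
  have "(\<lambda>i. \<Sum>j<p. gact (p^2) (j*p) y i) \<in> T (p*p mod p^2)"
    using Sk[OF assms(3) np p1 yT yv, of p] p1 by simp
  hence "Nb (p^2) p y \<in> T 0" unfolding Nb_def using np by simp
  moreover have "T 0 \<subseteq> U0 p K" by (rule T0_sub[OF assms(3) n0]) (auto intro: Madd Mzero Mvan)
  ultimately have NbM: "Nb (p^2) p y \<in> U0 p K" by blast
  define l where "l = Nb (p^2) p y 0"
  have lK: "l \<in> K" unfolding l_def using U0_coeff[OF K0 Kadd Kneg NbM] .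
  have const: "\<And>i. i < p^2 \<Longrightarrow> Nb (p^2) p y i = l" unfolding l_def using Nb_Fspan[OF p0 yF] .
  have m1: "(\<lambda>i. - (l * Phi p i)) \<in> U0 p K" using Mneg[OF U0_Phi[OF K0 Kadd Kneg pn lK]] .
  define x where "x = (\<lambda>i. y i + - (l * Phi p i))"
  have xF: "x \<in> Fspan (U0 p K)" unfolding x_def using Fspan_add[OF yF m1] .
  have xc: "coset (U0 p K) x = T p" unfolding x_def Tp using coset_shift[OF Madd Mneg m1] .
  have Nbx: "\<And>i. Nb (p^2) p x i = 0"
  proof -
    fix i
    have "Nb (p^2) p x i = Nb (p^2) p y i - l * Nb (p^2) p (Phi p) i" unfolding x_def by (rule Nb_diff)
    moreover have "Nb (p^2) p (Phi p :: nat \<Rightarrow> 'f) i = (if i < p^2 then 1 else 0)" using Nb_Phi[OF p0 pn] .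
    moreover have "\<not> i < p^2 \<Longrightarrow> Nb (p^2) p y i = 0" by (simp add: Nb_def gact_def)
    ultimately show "Nb (p^2) p x i = 0" using const[of i] by (cases "i < p^2") simp_all
  qed
  have eC: "(p, x) \<in> Crys (p^2) (U0 p K) T" using pn xF xc by (simp add: Crys_def)
  have pw: "\<And>k. crys_pow (p^2) (p, x) k = (k*p mod p^2, (\<lambda>i. \<Sum>j<k. gact (p^2) (j*p mod p^2) x i))"
    by (rule crys_pow_eq)
  have "(\<lambda>i. \<Sum>j<p. gact (p^2) (j*p mod p^2) x i) = Nb (p^2) p x"
    unfolding Nb_def using kpn by (intro ext sum.cong refl) simp
  hence "crys_pow (p^2) (p, x) p = crys_one"
    using pw[of p] Nbx np by (simp add: crys_one_def fun_eq_iff)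
  moreover have "\<forall>k. 0 < k \<and> k < p \<longrightarrow> crys_pow (p^2) (p, x) k \<noteq> crys_one"
  proof (intro allI impI)
    fix k assume k: "0 < k \<and> k < p"
    hence "k*p mod p^2 = k*p" using kpn by simp
    moreover have "k*p \<noteq> 0" using k p0 by simp
    ultimately show "crys_pow (p^2) (p, x) k \<noteq> crys_one" using pw[of k] by (simp add: crys_one_def)
  qed
  ultimately show ?thesis using eC by blast
qed

end
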